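(* Let $\tau\in\mathscr C^r(\mathbb{S}^1,\mathbb{R})$, fix $R>\|\tau'\|_\infty$ and $\rho>0$. Let $I_j=(a_j,b_j)$, $1\le j\le J$, be open intervals covering $[\log\lambda,\log\Lambda]$ with $b_j-a_j<\rho/3$; let $N=\lceil 6\rho^{-1}\log\lceil2\Lambda\rceil\rceil$; and let $q$ be a positive integer with $(q+1)N e^{-q\rho/2}<1/(4J)$ and $\ell^q\ge 2(q+1)N$. If $\mathcal N(\tau)\ge e^\rho$, then for infinitely many $n\ge q$ there exist a point $z_0=(x,s)\in\mathbb{T}^2$, a unit vector $v_0\in\mathbb{R}^2$, an integer $1\le j\le J$, a subset $B\subset\mathcal A^q$ with $\#B=2(q+1)N$, and for each $\beta\in B$ a subset $\Sigma(\beta)\subset\mathcal A^n$ with $\#\Sigma(\beta)\ge e^{\rho n}\ell^{-q}/(2J)$, such that for every $\beta\in B$ and every $\alpha\in\Sigma(\beta)$: $[\alpha]_q=\beta$, $v_0\in Df^n(x_\alpha)\mathscr K_R$, and $(E^n)'(x_\alpha)\in[e^{a_j n},e^{b_j n}]$.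
   Context: $\mathbb{S}^1=\mathbb{R}/\mathbb{Z}$, $\mathbb{T}^2=\mathbb{S}^1\times\mathbb{S}^1$, $r\ge2$. $E:\mathbb{S}^1\to\mathbb{S}^1$ is a $\mathscr C^r$ expanding map of degree $\ell\ge2$ with $1<\lambda\le E'(x)\le\Lambda$ for all $x$, and $0$ is a fixed point of $E$. For $\tau\in\mathscr C^r(\mathbb{S}^1,\mathbb{R})$, $f(x,s)=(E(x),s+\tau(x)\bmod1)$; $Df(x,s)=\begin{pmatrix}E'(x)&0\\ \tau'(x)&1\end{pmatrix}$ depends only on $x$, and $Df^n(y)$ denotes $Df^n(y,s)$ for any $s$. For $R>0$, $\vartheta_R=R/(\lambda-1)$, $\mathscr K_R=\{(\xi,\eta):|\eta|\le\vartheta_R|\xi|\}$; for $R>\|\tau'\|_\infty$, $\mathcal N(\tau,R;n)=\sup_{z}\sup_{v}\#\{\zeta\in f^{-n}(z):v\in Df^n(\zeta)\mathscr K_R\}$ (sup over $z\in\mathbb{T}^2$ and unit vectors $v$) and $\mathcal N(\tau)=\lim_n\mathcal N(\tau,R;n)^{1/n}$ (exists, independent of $R$). Symbolic coding: $\mathcal A=\{0,\dots,\ell-1\}$; the $\ell$ points of $E^{-1}(0)$ divide $\mathbb{S}^1$ into half-open intervals $\mathcal I(j)$, $j\in\mathcal A$, each mapped bijectively onto $\mathbb{S}^1$ by $E$. For $\alpha=(\alpha_n,\dots,\alpha_1)\in\mathcal A^n$, $\mathcal I(\alpha)=\bigcap_{i=0}^{n-1}E^{-i}(\mathcal I(\alpha_{n-i}))$,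 which $E^n$ maps bijectively onto $\mathbb{S}^1$; for $x\in\mathbb{S}^1$, $x_\alpha$ is the unique point of $\mathcal I(\alpha)$ with $E^n(x_\alpha)=x$. For $1\le p\le n$, $[\alpha]_p=(\alpha_p,\dots,\alpha_1)\in\mathcal A^p$. *)

theory Defs
  imports "HOL-Analysis.Analysis"
begin

text \<open>The circle S^1 = R/Z is represented by the points of [0,1);
 a circle map E is given by a lift F : R -> R with F(x+1) = F(x) + deg, and
 E(y) = frac (F y). Functions on S^1 are 1-periodic functions R -> R.
 The torus T^2 is [0,1) x [0,1). Vectors of R^2 are pairs real x real.\<close>

definition C_k :: "nat \<Rightarrow> (real \<Rightarrow> real) \<Rightarrow> bool" where
  "C_k k g \<longleftrightarrow> (\<exists>D :: nat \<Rightarrow> real \<Rightarrow> real. D 0 = g \<and>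
     (\<forall>i<k. \<forall>x. (D i has_real_derivative D (Suc i) x) (at x)) \<and>
     (\<forall>i\<le>k. continuous_on UNIV (D i)))"

definition circle :: "real set" where
  "circle = {0..<1}"

definition torus :: "(real \<times> real) set" where
  "torus = circle \<times> circle"

definition Ecirc :: "(real \<Rightarrow> real) \<Rightarrow> real \<Rightarrow> real" where
  "Ecirc F y = frac (F y)"

definition fskew :: "(real \<Rightarrow> real) \<Rightarrow> (real \<Rightarrow> real) \<Rightarrow> real \<times> real \<Rightarrow> real \<times> real" where
  "fskew F \<tau> z = (Ecirc F (fst z), frac (snd z + \<tau> (fst z)))"

definition Df :: "(real \<Rightarrow> real) \<Rightarrow> (real \<Rightarrow> real) \<Rightarrow> real \<Rightarrow> real \<times> real \<Rightarrow> real \<times> real" where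
  "Df F \<tau> x w = (deriv F x * fst w, deriv \<tau> x * fst w + snd w)"

fun Dfn :: "(real \<Rightarrow> real) \<Rightarrow> (real \<Rightarrow> real) \<Rightarrow> nat \<Rightarrow> real \<Rightarrow> real \<times> real \<Rightarrow> real \<times> real" where
  "Dfn F \<tau> 0 x w = w"
| "Dfn F \<tau> (Suc n) x w = Dfn F \<tau> n (Ecirc F x) (Df F \<tau> x w)"

definition cone :: "real \<Rightarrow> real \<Rightarrow> (real \<times> real) set" where
  "cone lam R = {w. \<bar>snd w\<bar> \<le> (R / (lam - 1)) * \<bar>fst w\<bar>}"

definition cone_image :: "(real \<Rightarrow> real) \<Rightarrow> (real \<Rightarrow> real) \<Rightarrow> real \<Rightarrow> real \<Rightarrow> nat \<Rightarrow> real \<Rightarrow> (real \<times> real) set" where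
  "cone_image F \<tau> lam R n y = Dfn F \<tau> n y ` cone lam R"

definition Ncount :: "(real \<Rightarrow> real) \<Rightarrow> (real \<Rightarrow> real) \<Rightarrow> real \<Rightarrow> real \<Rightarrow> nat \<Rightarrow> real" where
  "Ncount F \<tau> lam R n = Sup {real (card {\<zeta> \<in> torus. (fskew F \<tau> ^^ n) \<zeta> = z \<and>
        v \<in> cone_image F \<tau> lam R n (fst \<zeta>)}) | z v. z \<in> torus \<and> norm v = 1}"

definition Ntau :: "(real \<Rightarrow> real) \<Rightarrow> (real \<Rightarrow> real) \<Rightarrow> real \<Rightarrow> real \<Rightarrow> real" where
  "Ntau F \<tau> lam R = lim (\<lambda>n. Ncount F \<tau> lam R n powr (1 / real n))"

text \<open>Symbolic coding. The preimages of 0 under E in [0,1) are the points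
 F^{-1}(k), k = 0..deg-1; I(j) = [F^{-1}(j), F^{-1}(j+1)).\<close>
definition Icyl :: "(real \<Rightarrow> real) \<Rightarrow> nat \<Rightarrow> real set" where
  "Icyl F j = {y \<in> circle. real j \<le> F y \<and> F y < real j + 1}"

text \<open>Words alpha = (alpha_n, ..., alpha_1) in A^n, as functions on {1..n}.\<close>
definition words :: "nat \<Rightarrow> nat \<Rightarrow> (nat \<Rightarrow> nat) set" where
  "words deg n = PiE {1..n} (\<lambda>_. {..<deg})"

definition Iword :: "(real \<Rightarrow> real) \<Rightarrow> nat \<Rightarrow> (nat \<Rightarrow> nat) \<Rightarrow> real set" where
  "Iword F n \<alpha> = {y \<in> circle. \<forall>i<n. (Ecirc F ^^ i) y \<in> Icyl F (\<alpha> (n - i))}"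

definition xword :: "(real \<Rightarrow> real) \<Rightarrow> nat \<Rightarrow> (nat \<Rightarrow> nat) \<Rightarrow> real \<Rightarrow> real" where
  "xword F n \<alpha> x = (THE y. y \<in> Iword F n \<alpha> \<and> (Ecirc F ^^ n) y = x)"

definition trunc :: "nat \<Rightarrow> (nat \<Rightarrow> nat) \<Rightarrow> (nat \<Rightarrow> nat)" where
  "trunc p \<alpha> = restrict \<alpha> {1..p}"

end

theory Submission
  imports Defs
begin

locale skew =
  fixes F \<tau> :: "real \<Rightarrow> real" and deg :: nat and lam \<Lambda> R :: real
  assumes deg: "deg \<ge> 1"
    and F_der: "\<And>x. (F has_real_derivative deriv F x) (at x)"
    and F_lift: "\<And>x. F (x + 1) = F x + real deg"
    and F_fix: "F 0 = 0"
    and lam: "1 < lam"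
    and F_exp: "\<And>x. lam \<le> deriv F x \<and> deriv F x \<le> \<Lambda>"
    and tau_bd: "\<And>x. \<bar>deriv \<tau> x\<bar> \<le> R"
begin

abbreviation "E \<equiv> Ecirc F"

lemma F_cont: "continuous_on S F"
  using F_der by (meson DERIV_isCont continuous_at_imp_continuous_on)

lemma F_strict: "x < y \<Longrightarrow> F x < F y"
proof -
  assume "x < y"
  have "\<And>t. \<exists>d. (F has_real_derivative d) (at t) \<and> 0 < d"
    using F_der F_exp lam by (meson less_le_trans less_trans zero_less_one)
  then show ?thesis using DERIV_pos_imp_increasing[OF \<open>x < y\<close>, of F] by blast
qed

lemma F_inj: "F x = F y \<Longrightarrow> x = y"
  using F_strict by (metis linorder_neqE_linordered_idom order_less_irrefl)

lemma F_one: "F 1 = real deg"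
  using F_lift[of 0] F_fix by simp

lemma F_range: "y \<in> circle \<Longrightarrow> 0 \<le> F y \<and> F y < real deg"
  unfolding circle_def using F_strict[of 0 y] F_strict[of y 1] F_fix F_one
  by (cases "y = 0") auto

lemma E_circle: "E y \<in> circle"
  unfolding Ecirc_def circle_def by (simp add: frac_lt_1)

lemma Epow_circle: "y \<in> circle \<Longrightarrow> (E ^^ n) y \<in> circle"
  by (induction n) (auto simp: E_circle)

definition idx :: "real \<Rightarrow> nat" where "idx y = nat \<lfloor>F y\<rfloor>"

lemma idx_in: "y \<in> circle \<Longrightarrow> y \<in> Icyl F (idx y) \<and> idx y < deg"
proof -
  assume y: "y \<in> circle"
  from F_range[OF y] have "0 \<le> F y" "F y < deg" by auto
  then have "real (nat \<lfloor>F y\<rfloor>) = of_int \<lfloor>F y\<rfloor>" by simp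
  moreover have "of_int \<lfloor>F y\<rfloor> \<le> F y" "F y < of_int \<lfloor>F y\<rfloor> + 1" by linarith+
  moreover have "\<lfloor>F y\<rfloor> < int deg" using \<open>F y < deg\<close>
    by (metis floor_less_iff of_int_of_nat_eq)
  ultimately show ?thesis using y unfolding Icyl_def idx_def by auto
qed

lemma Icyl_idx: "y \<in> Icyl F j \<Longrightarrow> j = idx y"
proof -
  assume "y \<in> Icyl F j"
  then have "real j \<le> F y" "F y < real j + 1" unfolding Icyl_def by auto
  then have "\<lfloor>F y\<rfloor> = int j" by (simp add: floor_eq_iff)
  then show ?thesis unfolding idx_def by simp
qed

lemma Icyl_E: "y \<in> Icyl F j \<Longrightarrow> E y = F y - real j"
  unfolding Icyl_def Ecirc_def
  by (simp add: frac_unique_iff)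

lemma Icyl_inj: "y1 \<in> Icyl F j \<Longrightarrow> y2 \<in> Icyl F j \<Longrightarrow> E y1 = E y2 \<Longrightarrow> y1 = y2"
  using Icyl_E F_inj by force

lemma Icyl_circle: "y \<in> Icyl F j \<Longrightarrow> y \<in> circle"
  unfolding Icyl_def by auto

lemma Icyl_ex: assumes w: "w \<in> circle" and j: "j < deg"
  shows "\<exists>y \<in> Icyl F j. E y = w"
proof -
  have w01: "0 \<le> w" "w < 1" using w unfolding circle_def by auto
  have jd: "real j + 1 \<le> real deg" using j by linarith
  have "F 0 \<le> w + j" "w + j \<le> F 1" using F_fix F_one w01 jd by auto
  from IVT'[OF this _ F_cont] obtain y where y: "0 \<le> y" "y \<le> 1" "F y = w + j" by auto
  have "y \<noteq> 1" using y F_one w01 jd by auto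
  then have "y \<in> Icyl F j" using y w01 unfolding Icyl_def circle_def by auto
  moreover have "E y = w" using Icyl_E[OF \<open>y \<in> Icyl F j\<close>] y by simp
  ultimately show ?thesis by blast
qed


lemma Iword_circle: "y \<in> Iword F n \<alpha> \<Longrightarrow> y \<in> circle"
  unfolding Iword_def by auto

lemma Iword_0: "Iword F 0 \<alpha> = circle"
  unfolding Iword_def by auto

lemma Iword_Suc: "Iword F (Suc n) \<alpha> = {y. y \<in> Icyl F (\<alpha> (Suc n)) \<and> E y \<in> Iword F n \<alpha>}"
proof (intro set_eqI iffI)
  fix y assume y: "y \<in> Iword F (Suc n) \<alpha>"
  then have c: "y \<in> circle" and h: "\<And>i. i < Suc n \<Longrightarrow> (E ^^ i) y \<in> Icyl F (\<alpha> (Suc n - i))"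
    unfolding Iword_def by auto
  have "y \<in> Icyl F (\<alpha> (Suc n))" using h[of 0] by simp
  moreover have "E y \<in> Iword F n \<alpha>" unfolding Iword_def
  proof (intro CollectI conjI allI impI)
    show "E y \<in> circle" by (rule E_circle)
    fix i assume "i < n"
    then show "(E ^^ i) (E y) \<in> Icyl F (\<alpha> (n - i))"
      using h[of "Suc i"] by (simp add: funpow_Suc_right del: funpow.simps)
  qed
  ultimately show "y \<in> {y. y \<in> Icyl F (\<alpha> (Suc n)) \<and> E y \<in> Iword F n \<alpha>}" by blast
next
  fix y assume "y \<in> {y. y \<in> Icyl F (\<alpha> (Suc n)) \<and> E y \<in> Iword F n \<alpha>}"
  then have a: "y \<in> Icyl F (\<alpha> (Suc n))" and b: "E y \<in> Iword F n \<alpha>" by auto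
  show "y \<in> Iword F (Suc n) \<alpha>" unfolding Iword_def
  proof (intro CollectI conjI allI impI)
    show "y \<in> circle" using a by (rule Icyl_circle)
    fix i assume i: "i < Suc n"
    show "(E ^^ i) y \<in> Icyl F (\<alpha> (Suc n - i))"
    proof (cases i)
      case 0 then show ?thesis using a by simp
    next
      case (Suc k)
      then have "k < n" using i by simp
      then have "(E ^^ k) (E y) \<in> Icyl F (\<alpha> (n - k))" using b unfolding Iword_def by auto
      then show ?thesis using Suc by (simp add: funpow_Suc_right del: funpow.simps)
    qed
  qed
qed

lemma Iword_uniq: "y1 \<in> Iword F n \<alpha> \<Longrightarrow> y2 \<in> Iword F n \<alpha> \<Longrightarrow> (E ^^ n) y1 = (E ^^ n) y2 \<Longrightarrow> y1 = y2"
proof (induction n arbitrary: y1 y2)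
  case 0 then show ?case by simp
next
  case (Suc n)
  from Suc.prems have a: "y1 \<in> Icyl F (\<alpha> (Suc n))" "E y1 \<in> Iword F n \<alpha>"
    "y2 \<in> Icyl F (\<alpha> (Suc n))" "E y2 \<in> Iword F n \<alpha>" by (auto simp: Iword_Suc)
  have "(E ^^ n) (E y1) = (E ^^ n) (E y2)" using Suc.prems(3)
    by (simp add: funpow_Suc_right del: funpow.simps)
  then have "E y1 = E y2" using Suc.IH a by blast
  then show ?case using Icyl_inj a by blast
qed

lemma Iword_ex: "x \<in> circle \<Longrightarrow> (\<forall>i\<in>{1..n}. \<alpha> i < deg) \<Longrightarrow> \<exists>y. y \<in> Iword F n \<alpha> \<and> (E ^^ n) y = x"
proof (induction n)
  case 0 then show ?case by (auto simp: Iword_0)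
next
  case (Suc n)
  then obtain y' where y': "y' \<in> Iword F n \<alpha>" "(E ^^ n) y' = x" by auto
  have "\<alpha> (Suc n) < deg" using Suc.prems by auto
  from Icyl_ex[OF Iword_circle[OF y'(1)] this] obtain y where
    y: "y \<in> Icyl F (\<alpha> (Suc n))" "E y = y'" by auto
  have "y \<in> Iword F (Suc n) \<alpha>" using y y' by (simp add: Iword_Suc)
  moreover have "(E ^^ Suc n) y = x" using y y' by (simp add: funpow_Suc_right del: funpow.simps)
  ultimately show ?case by blast
qed

lemma xword_props: assumes "x \<in> circle" "\<forall>i\<in>{1..n}. \<alpha> i < deg"
  shows "xword F n \<alpha> x \<in> Iword F n \<alpha> \<and> (E ^^ n) (xword F n \<alpha> x) = x"
proof -
  have "\<exists>!y. y \<in> Iword F n \<alpha> \<and> (E ^^ n) y = x"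
    using Iword_ex[OF assms] Iword_uniq by blast
  then show ?thesis unfolding xword_def by (rule theI')
qed

lemma xword_eq: assumes "x \<in> circle" "\<forall>i\<in>{1..n}. \<alpha> i < deg"
    "y \<in> Iword F n \<alpha>" "(E ^^ n) y = x"
  shows "xword F n \<alpha> x = y"
  using xword_props[OF assms(1,2)] assms(3,4) Iword_uniq by metis

lemma words_lt: "\<alpha> \<in> words deg n \<Longrightarrow> \<forall>i\<in>{1..n}. \<alpha> i < deg"
  unfolding words_def by auto

definition wordof :: "nat \<Rightarrow> real \<Rightarrow> (nat \<Rightarrow> nat)" where
  "wordof n y = (\<lambda>i. if i \<in> {1..n} then idx ((E ^^ (n - i)) y) else undefined)"

lemma wordof_props: assumes "y \<in> circle"
  shows "wordof n y \<in> words deg n \<and> y \<in> Iword F n (wordof n y)"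
proof
  show "wordof n y \<in> words deg n" unfolding words_def wordof_def
    using idx_in Epow_circle[OF assms] by auto
  show "y \<in> Iword F n (wordof n y)" unfolding Iword_def
  proof (intro CollectI conjI allI impI)
    show "y \<in> circle" by (fact assms)
    fix i assume "i < n"
    then have "wordof n y (n - i) = idx ((E ^^ i) y)" unfolding wordof_def by auto
    then show "(E ^^ i) y \<in> Icyl F (wordof n y (n - i))" using idx_in Epow_circle[OF assms] by auto
  qed
qed

lemma Iword_word_eq: assumes "\<alpha> \<in> words deg n" "\<alpha>' \<in> words deg n"
    "y \<in> Iword F n \<alpha>" "y \<in> Iword F n \<alpha>'"
  shows "\<alpha> = \<alpha>'"
proof -
  have "\<alpha> k = \<alpha>' k" if k: "k \<in> {1..n}" for k
  proof -
    have "n - k < n" "n - (n - k) = k" using k by auto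
    then have "(E ^^ (n - k)) y \<in> Icyl F (\<alpha> k)" "(E ^^ (n - k)) y \<in> Icyl F (\<alpha>' k)"
      using assms(3,4) unfolding Iword_def by (metis (no_types, lifting) mem_Collect_eq)+
    then show ?thesis using Icyl_idx by metis
  qed
  then show ?thesis using assms(1,2) unfolding words_def by (rule PiE_ext[rotated 2]) 
qed

definition Pre :: "nat \<Rightarrow> real \<Rightarrow> real set" where
  "Pre n x = {y \<in> circle. (E ^^ n) y = x}"

lemma xword_bij: assumes x: "x \<in> circle"
  shows "bij_betw (\<lambda>\<alpha>. xword F n \<alpha> x) (words deg n) (Pre n x)"
proof (rule bij_betwI')
  fix \<alpha> \<alpha>' assume a: "\<alpha> \<in> words deg n" "\<alpha>' \<in> words deg n"
  have p1: "xword F n \<alpha> x \<in> Iword F n \<alpha>" using xword_props[OF x words_lt[OF a(1)]] by blast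
  have p2: "xword F n \<alpha>' x \<in> Iword F n \<alpha>'" using xword_props[OF x words_lt[OF a(2)]] by blast
  show "(xword F n \<alpha> x = xword F n \<alpha>' x) = (\<alpha> = \<alpha>')"
  proof
    assume "xword F n \<alpha> x = xword F n \<alpha>' x"
    then show "\<alpha> = \<alpha>'" using Iword_word_eq[OF a p1] p2 by simp
  qed simp
next
  fix \<alpha> assume a: "\<alpha> \<in> words deg n"
  show "xword F n \<alpha> x \<in> Pre n x" unfolding Pre_def
    using xword_props[OF x words_lt[OF a]] Iword_circle by blast
next
  fix y assume "y \<in> Pre n x"
  then have y: "y \<in> circle" "(E ^^ n) y = x" unfolding Pre_def by auto
  have w: "wordof n y \<in> words deg n" "y \<in> Iword F n (wordof n y)" using wordof_props[OF y(1)] by auto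
  have "xword F n (wordof n y) x = y" by (rule xword_eq[OF x words_lt[OF w(1)] w(2) y(2)])
  then show "\<exists>\<alpha>\<in>words deg n. y = xword F n \<alpha> x" using w(1) by metis
qed

lemma words_finite: "finite (words deg n)"
  unfolding words_def by (simp add: finite_PiE)

lemma Pre_finite: "x \<in> circle \<Longrightarrow> finite (Pre n x)"
  using xword_bij bij_betw_finite words_finite by blast

lemma trunc_words: "\<alpha> \<in> words deg n \<Longrightarrow> q \<le> n \<Longrightarrow> trunc q \<alpha> \<in> words deg q"
proof -
  assume "\<alpha> \<in> words deg n" "q \<le> n"
  then have "\<forall>i\<in>{1..q}. \<alpha> i < deg" using words_lt by force
  then show ?thesis unfolding words_def trunc_def by (simp add: restrict_PiE_iff)
qed

lemma xword_trunc: assumes x: "x \<in> circle" and a: "\<alpha> \<in> words deg n" and q: "q \<le> n"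
  shows "(E ^^ (n - q)) (xword F n \<alpha> x) = xword F q (trunc q \<alpha>) x"
proof -
  define y where "y = xword F n \<alpha> x"
  have y: "y \<in> Iword F n \<alpha>" "(E ^^ n) y = x" using xword_props[OF x words_lt[OF a]] y_def by auto
  have "(E ^^ (n - q)) y \<in> Iword F q (trunc q \<alpha>)" unfolding Iword_def
  proof (intro CollectI conjI allI impI)
    show "(E ^^ (n - q)) y \<in> circle" using Epow_circle Iword_circle y(1) by blast
    fix i assume i: "i < q"
    then have "i + (n - q) < n" "n - (i + (n - q)) = q - i" using q by auto
    then have "(E ^^ (i + (n - q))) y \<in> Icyl F (\<alpha> (q - i))" using y(1) unfolding Iword_def
      by (metis (no_types, lifting) mem_Collect_eq)
    moreover have "trunc q \<alpha> (q - i) = \<alpha> (q - i)" using i unfolding trunc_def by auto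
    ultimately show "(E ^^ i) ((E ^^ (n - q)) y) \<in> Icyl F (trunc q \<alpha> (q - i))"
      by (simp add: funpow_add)
  qed
  moreover have "(E ^^ q) ((E ^^ (n - q)) y) = (E ^^ (q + (n - q))) y" by (simp add: funpow_add)
  then have "(E ^^ q) ((E ^^ (n - q)) y) = x" using y(2) q by simp
  ultimately have "xword F q (trunc q \<alpha>) x = (E ^^ (n - q)) y"
    using xword_eq[OF x words_lt[OF trunc_words[OF a q]]] by blast
  then show ?thesis unfolding y_def by simp
qed

end


context skew begin

lemma R_nonneg: "0 \<le> R" using tau_bd[of 0] by linarith

lemma Dfn_form: "\<exists>a b. a > 0 \<and> (\<forall>w. Dfn F \<tau> n y w = (a * fst w, b * fst w + snd w))"
proof (induction n arbitrary: y)
  case 0 then show ?case by (intro exI[of _ 1] exI[of _ 0]) auto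
next
  case (Suc n)
  from Suc.IH[of "E y"] obtain a b where ab: "a > 0" "\<And>w. Dfn F \<tau> n (E y) w = (a * fst w, b * fst w + snd w)"
    by blast
  have d: "deriv F y > 0" using F_exp[of y] lam by linarith
  show ?case
    by (intro exI[of _ "a * deriv F y"] exI[of _ "b * deriv F y + deriv \<tau> y"])
      (use ab d in \<open>auto simp: Df_def algebra_simps\<close>)
qed

lemma Dfn_scale: "Dfn F \<tau> n y (c *\<^sub>R w) = c *\<^sub>R Dfn F \<tau> n y w"
proof -
  obtain a b where ab: "\<And>w. Dfn F \<tau> n y w = (a * fst w, b * fst w + snd w)"
    using Dfn_form by blast
  show ?thesis by (cases w) (simp add: ab algebra_simps)
qed

lemma Dfn_zero: "Dfn F \<tau> n y 0 = 0"
  using Dfn_scale[of n y 0 0] by simp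

lemma Dfn_inj: "Dfn F \<tau> n y u1 = Dfn F \<tau> n y u2 \<Longrightarrow> u1 = u2"
proof -
  assume h: "Dfn F \<tau> n y u1 = Dfn F \<tau> n y u2"
  obtain a b where ab: "a > 0" "\<And>w. Dfn F \<tau> n y w = (a * fst w, b * fst w + snd w)"
    using Dfn_form by blast
  from h ab have "a * fst u1 = a * fst u2" "b * fst u1 + snd u1 = b * fst u2 + snd u2" by auto
  then have "fst u1 = fst u2" "snd u1 = snd u2" using ab(1) by auto
  then show ?thesis by (simp add: prod_eq_iff)
qed

lemma Dfn_add: "Dfn F \<tau> (m + n) y w = Dfn F \<tau> n ((E ^^ m) y) (Dfn F \<tau> m y w)"
proof (induction m arbitrary: y w)
  case 0 then show ?case by simp
next
  case (Suc m)
  then show ?case by (simp add: funpow_Suc_right del: funpow.simps)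
qed

lemma cone_scale: "w \<in> cone lam R \<Longrightarrow> c *\<^sub>R w \<in> cone lam R"
proof -
  assume "w \<in> cone lam R"
  then have h: "\<bar>snd w\<bar> \<le> (R / (lam - 1)) * \<bar>fst w\<bar>" unfolding cone_def by auto
  have "\<bar>c\<bar> * \<bar>snd w\<bar> \<le> \<bar>c\<bar> * ((R / (lam - 1)) * \<bar>fst w\<bar>)" by (rule mult_left_mono[OF h]) auto
  then show ?thesis unfolding cone_def by (simp add: abs_mult algebra_simps)
qed

lemma cone_10: "(1, 0) \<in> cone lam R"
  unfolding cone_def using R_nonneg lam by auto

lemma cone_Df: assumes "w \<in> cone lam R" shows "Df F \<tau> y w \<in> cone lam R"
proof -
  define th where "th = R / (lam - 1)"
  have th: "th \<ge> 0" "th * (lam - 1) = R" using R_nonneg lam unfolding th_def by auto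
  have w: "\<bar>snd w\<bar> \<le> th * \<bar>fst w\<bar>" using assms unfolding cone_def th_def by auto
  have "\<bar>deriv \<tau> y * fst w + snd w\<bar> \<le> \<bar>deriv \<tau> y\<bar> * \<bar>fst w\<bar> + \<bar>snd w\<bar>"
    by (metis abs_mult abs_triangle_ineq)
  also have "\<dots> \<le> R * \<bar>fst w\<bar> + th * \<bar>fst w\<bar>"
    using tau_bd[of y] w by (intro add_mono mult_right_mono) auto
  also have "\<dots> = th * lam * \<bar>fst w\<bar>" using th by (simp add: algebra_simps)
  also have "\<dots> \<le> th * deriv F y * \<bar>fst w\<bar>"
    using F_exp[of y] th(1) by (intro mult_right_mono mult_left_mono) auto
  also have "\<dots> = th * \<bar>deriv F y * fst w\<bar>" using F_exp[of y] lam by (simp add: abs_mult)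
  finally show ?thesis unfolding cone_def Df_def th_def by simp
qed

lemma cone_Dfn: "w \<in> cone lam R \<Longrightarrow> Dfn F \<tau> n y w \<in> cone lam R"
  by (induction n arbitrary: y w) (auto simp: cone_Df)

definition P :: "nat \<Rightarrow> real \<Rightarrow> real \<times> real \<Rightarrow> real set" where
  "P n x v = {y \<in> circle. (E ^^ n) y = x \<and> v \<in> cone_image F \<tau> lam R n y}"

lemma P_sub: "P n x v \<subseteq> Pre n x"
  unfolding P_def Pre_def by auto

lemma P_finite: "x \<in> circle \<Longrightarrow> finite (P n x v)"
  using Pre_finite P_sub finite_subset by metis

lemma card_Pre: "x \<in> circle \<Longrightarrow> card (Pre n x) = card (words deg n)"
  using xword_bij bij_betw_same_card by metis

lemma fskew_pow: "t \<in> circle \<Longrightarrow>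
  (fskew F \<tau> ^^ n) (y, t) = ((E ^^ n) y, frac (t + (\<Sum>i<n. \<tau> ((E ^^ i) y))))"
proof (induction n)
  case 0 then show ?case by (simp add: circle_def)
next
  case (Suc n)
  then show ?case by (simp add: fskew_def algebra_simps)
qed

lemma count_eq: assumes x: "x \<in> circle" and s: "s \<in> circle"
  shows "card {\<zeta> \<in> torus. (fskew F \<tau> ^^ n) \<zeta> = (x, s) \<and> v \<in> cone_image F \<tau> lam R n (fst \<zeta>)}
       = card (P n x v)"
proof -
  define Q where "Q = {\<zeta> \<in> torus. (fskew F \<tau> ^^ n) \<zeta> = (x, s) \<and> v \<in> cone_image F \<tau> lam R n (fst \<zeta>)}"
  define S where "S = (\<lambda>y. \<Sum>i<n. \<tau> ((E ^^ i) y))"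
  have Q: "(y, t) \<in> Q \<longleftrightarrow> y \<in> circle \<and> t \<in> circle \<and> (E ^^ n) y = x \<and> frac (t + S y) = s
     \<and> v \<in> cone_image F \<tau> lam R n y" for y t
    unfolding Q_def torus_def S_def using fskew_pow[of t n y] by auto
  have "inj_on fst Q"
  proof (rule inj_onI)
    fix z1 z2 assume z: "z1 \<in> Q" "z2 \<in> Q" "fst z1 = fst z2"
    obtain y t1 t2 where zz: "z1 = (y, t1)" "z2 = (y, t2)" using z(3) by (metis prod.collapse)
    have h: "t1 \<in> circle" "t2 \<in> circle" "frac (t1 + S y) = frac (t2 + S y)"
      using z(1,2) Q unfolding zz by auto
    from frac_eqE[OF h(3)] obtain k where k: "t1 + S y = t2 + S y + of_int k" by blast
    have "\<bar>of_int k\<bar> < (1::real)" using h(1,2) k unfolding circle_def by auto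
    then have "k = 0" by linarith
    then show "z1 = z2" using k zz by simp
  qed
  moreover have "fst ` Q = P n x v"
  proof (intro set_eqI iffI)
    fix y assume "y \<in> fst ` Q"
    then obtain t where "(y, t) \<in> Q" by auto
    then show "y \<in> P n x v" using Q unfolding P_def by auto
  next
    fix y assume y: "y \<in> P n x v"
    define t where "t = frac (s - S y)"
    have "t \<in> circle" unfolding t_def circle_def by (simp add: frac_lt_1)
    moreover have "frac (t + S y) = s" unfolding t_def using s by (simp add: circle_def)
    ultimately have "(y, t) \<in> Q" using Q y unfolding P_def by auto
    then show "y \<in> fst ` Q" by force
  qed
  ultimately show ?thesis unfolding Q_def[symmetric] by (metis card_image)
qed

abbreviation "Nc n \<equiv> Ncount F \<tau> lam R n"

definition Vals :: "nat \<Rightarrow> real set" where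
  "Vals n = {real (card (P n x v)) | x v. x \<in> circle \<and> norm v = 1}"

lemma Nc_Vals: "Nc n = Sup (Vals n)"
proof -
  have "{real (card {\<zeta> \<in> torus. (fskew F \<tau> ^^ n) \<zeta> = z \<and> v \<in> cone_image F \<tau> lam R n (fst \<zeta>)}) | z v.
      z \<in> torus \<and> norm v = 1} = Vals n"
  proof (intro set_eqI iffI)
    fix c assume "c \<in> {real (card {\<zeta> \<in> torus. (fskew F \<tau> ^^ n) \<zeta> = z \<and> v \<in> cone_image F \<tau> lam R n (fst \<zeta>)}) | z v.
      z \<in> torus \<and> norm v = 1}"
    then obtain x s v where "c = real (card {\<zeta> \<in> torus. (fskew F \<tau> ^^ n) \<zeta> = (x, s) \<and> v \<in> cone_image F \<tau> lam R n (fst \<zeta>)})"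
      "x \<in> circle" "s \<in> circle" "norm v = 1" unfolding torus_def by auto
    then have "c = real (card (P n x v))" "x \<in> circle" "norm v = 1" using count_eq by auto
    then show "c \<in> Vals n" unfolding Vals_def by blast
  next
    fix c assume "c \<in> Vals n"
    then obtain x v where xv: "c = real (card (P n x v))" "x \<in> circle" "norm v = 1" unfolding Vals_def by auto
    have "0 \<in> circle" unfolding circle_def by auto
    then have "c = real (card {\<zeta> \<in> torus. (fskew F \<tau> ^^ n) \<zeta> = (x, 0) \<and> v \<in> cone_image F \<tau> lam R n (fst \<zeta>)})"
      using count_eq[OF xv(2)] xv(1) by auto
    moreover have "(x, 0) \<in> torus" using xv(2) \<open>0 \<in> circle\<close> unfolding torus_def by auto
    ultimately show "c \<in> {real (card {\<zeta> \<in> torus. (fskew F \<tau> ^^ n) \<zeta> = z \<and> v \<in> cone_image F \<tau> lam R n (fst \<zeta>)}) | z v.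
      z \<in> torus \<and> norm v = 1}" using xv(3) by blast
  qed
  then show ?thesis unfolding Ncount_def by simp
qed

lemma zero_circle: "(0::real) \<in> circle" unfolding circle_def by auto

lemma Vals_finite: "finite (Vals n)"
proof -
  have "Vals n \<subseteq> real ` {..card (words deg n)}"
  proof
    fix c assume "c \<in> Vals n"
    then obtain x v where xv: "c = real (card (P n x v))" "x \<in> circle" unfolding Vals_def by auto
    have "card (P n x v) \<le> card (Pre n x)" using card_mono[OF Pre_finite[OF xv(2)] P_sub] .
    then show "c \<in> real ` {..card (words deg n)}" using xv card_Pre by auto
  qed
  then show ?thesis using finite_subset by blast
qed

lemma Vals_ne: "Vals n \<noteq> {}"
proof -
  have "norm ((1, 0) :: real \<times> real) = 1" by simp
  then show ?thesis unfolding Vals_def using zero_circle by blast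
qed

lemma Nc_upper: "x \<in> circle \<Longrightarrow> norm v = 1 \<Longrightarrow> real (card (P n x v)) \<le> Nc n"
proof -
  assume "x \<in> circle" "norm v = 1"
  then have "real (card (P n x v)) \<in> Vals n" unfolding Vals_def by blast
  then show ?thesis unfolding Nc_Vals by (rule cSup_upper) (rule bdd_above_finite[OF Vals_finite])
qed

lemma Nc_attained: "\<exists>x v. x \<in> circle \<and> norm v = 1 \<and> Nc n = real (card (P n x v))"
proof -
  have "Sup (Vals n) \<in> Vals n" using cSup_eq_Max[OF Vals_finite Vals_ne] Max_in[OF Vals_finite Vals_ne] by simp
  then show ?thesis unfolding Nc_Vals Vals_def by auto
qed

lemma Nc_ge1: "Nc n \<ge> 1"
proof -
  define w0 where "w0 = Dfn F \<tau> n 0 (1, 0)"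
  have "w0 \<noteq> 0" unfolding w0_def using Dfn_inj[of n 0 "(1,0)" 0] Dfn_zero by (auto simp: zero_prod_def)
  define v where "v = (1 / norm w0) *\<^sub>R w0"
  have nv: "norm v = 1" using \<open>w0 \<noteq> 0\<close> unfolding v_def by simp
  have "v = Dfn F \<tau> n 0 ((1 / norm w0) *\<^sub>R (1, 0))" unfolding v_def w0_def Dfn_scale ..
  then have "v \<in> cone_image F \<tau> lam R n 0" unfolding cone_image_def using cone_scale[OF cone_10] by blast
  then have "0 \<in> P n ((E ^^ n) 0) v" unfolding P_def using zero_circle by auto
  then have "card (P n ((E ^^ n) 0) v) \<ge> 1"
    using P_finite[OF Epow_circle[OF zero_circle]] by (metis One_nat_def Suc_leI card_gt_0_iff empty_iff)
  moreover have "real (card (P n ((E ^^ n) 0) v)) \<le> Nc n" using Nc_upper[OF Epow_circle[OF zero_circle] nv] .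
  ultimately show ?thesis by linarith
qed

end


context skew begin

lemma Epow_add: "(E ^^ (m + n)) y = (E ^^ n) ((E ^^ m) y)"
  by (simp add: funpow_add add.commute[of m n])

lemma fiber: assumes x: "x \<in> circle" and v: "norm v = 1" and w: "w \<in> circle"
  shows "real (card {y \<in> P (m + n) x v. (E ^^ m) y = w}) \<le> Nc m"
proof (cases "{y \<in> P (m + n) x v. (E ^^ m) y = w} = {}")
  case True then show ?thesis by (subst True) (use Nc_ge1[of m] in simp)
next
  case False
  then obtain y0 where y0: "y0 \<in> P (m + n) x v" "(E ^^ m) y0 = w" by blast
  then obtain c0 where c0: "c0 \<in> cone lam R" "v = Dfn F \<tau> (m + n) y0 c0"
    unfolding P_def cone_image_def by auto
  define u0 where "u0 = Dfn F \<tau> m y0 c0"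
  have vu: "v = Dfn F \<tau> n w u0" using c0 y0(2) unfolding u0_def Dfn_add by simp
  have "u0 \<noteq> 0" using vu v Dfn_zero by auto
  define v' where "v' = (1 / norm u0) *\<^sub>R u0"
  have nv': "norm v' = 1" using \<open>u0 \<noteq> 0\<close> unfolding v'_def by simp
  have sub: "{y \<in> P (m + n) x v. (E ^^ m) y = w} \<subseteq> P m w v'"
  proof
    fix y assume "y \<in> {y \<in> P (m + n) x v. (E ^^ m) y = w}"
    then have y: "y \<in> circle" "(E ^^ m) y = w" "v \<in> cone_image F \<tau> lam R (m + n) y"
      unfolding P_def by auto
    then obtain c where c: "c \<in> cone lam R" "v = Dfn F \<tau> (m + n) y c"
      unfolding cone_image_def by auto
    then have "Dfn F \<tau> n w (Dfn F \<tau> m y c) = Dfn F \<tau> n w u0" using vu y(2) unfolding Dfn_add by simp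
    then have "Dfn F \<tau> m y c = u0" by (rule Dfn_inj)
    then have "v' = Dfn F \<tau> m y ((1 / norm u0) *\<^sub>R c)" unfolding v'_def Dfn_scale by simp
    then have "v' \<in> cone_image F \<tau> lam R m y" unfolding cone_image_def using cone_scale[OF c(1)] by blast
    then show "y \<in> P m w v'" unfolding P_def using y by auto
  qed
  have "card {y \<in> P (m + n) x v. (E ^^ m) y = w} \<le> card (P m w v')"
    by (rule card_mono[OF P_finite[OF w] sub])
  then have "real (card {y \<in> P (m + n) x v. (E ^^ m) y = w}) \<le> real (card (P m w v'))" by simp
  then show ?thesis using Nc_upper[OF w nv', of m] by linarith
qed

lemma submult: "Nc (m + n) \<le> Nc m * Nc n"
proof -
  obtain x v where xv: "x \<in> circle" "norm v = 1" "Nc (m + n) = real (card (P (m + n) x v))"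
    using Nc_attained by blast
  have sub: "P (m + n) x v \<subseteq> (\<Union>w\<in>P n x v. {y \<in> P (m + n) x v. (E ^^ m) y = w})"
  proof
    fix y assume y: "y \<in> P (m + n) x v"
    then have y': "y \<in> circle" "(E ^^ n) ((E ^^ m) y) = x" "v \<in> cone_image F \<tau> lam R (m + n) y"
      unfolding P_def by (auto simp: Epow_add)
    then obtain c where c: "c \<in> cone lam R" "v = Dfn F \<tau> (m + n) y c"
      unfolding cone_image_def by auto
    have "v = Dfn F \<tau> n ((E ^^ m) y) (Dfn F \<tau> m y c)" using c(2) Dfn_add by simp
    then have "v \<in> cone_image F \<tau> lam R n ((E ^^ m) y)" unfolding cone_image_def
      using cone_Dfn[OF c(1)] by blast
    then have "(E ^^ m) y \<in> P n x v" unfolding P_def using y' Epow_circle by auto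
    then show "y \<in> (\<Union>w\<in>P n x v. {y \<in> P (m + n) x v. (E ^^ m) y = w})" using y by blast
  qed
  have fin: "finite (P n x v)" by (rule P_finite[OF xv(1)])
  have "card (P (m + n) x v) \<le> card (\<Union>w\<in>P n x v. {y \<in> P (m + n) x v. (E ^^ m) y = w})"
  proof (rule card_mono[OF _ sub])
    show "finite (\<Union>w\<in>P n x v. {y \<in> P (m + n) x v. (E ^^ m) y = w})"
      using fin P_finite[OF xv(1), of "m + n" v] by auto
  qed
  also have "\<dots> \<le> (\<Sum>w\<in>P n x v. card {y \<in> P (m + n) x v. (E ^^ m) y = w})"
    by (rule card_UN_le[OF fin])
  finally have "real (card (P (m + n) x v)) \<le> (\<Sum>w\<in>P n x v. real (card {y \<in> P (m + n) x v. (E ^^ m) y = w}))"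
    by (metis of_nat_le_iff of_nat_sum)
  also have "\<dots> \<le> real (card (P n x v)) * Nc m"
    using sum_bounded_above[of "P n x v" "\<lambda>w. real (card {y \<in> P (m + n) x v. (E ^^ m) y = w})" "Nc m"]
      fiber[OF xv(1,2)] P_def by auto
  also have "\<dots> \<le> Nc n * Nc m"
    using Nc_upper[OF xv(1,2)] Nc_ge1[of m] by (intro mult_right_mono) auto
  finally show ?thesis using xv(3) by (simp add: mult.commute)
qed

end


lemma subadd_iter:
  fixes b :: "nat \<Rightarrow> real"
  assumes sub: "\<And>m n. b (m + n) \<le> b m + b n"
  shows "b (q * k + r) \<le> real q * b k + b r"
proof (induction q)
  case 0 then show ?case by simp
next
  case (Suc q)
  have "b (Suc q * k + r) = b (k + (q * k + r))" by (simp add: algebra_simps)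
  also have "\<dots> \<le> b k + b (q * k + r)" by (rule sub)
  finally show ?case using Suc by (simp add: algebra_simps)
qed

lemma fekete_conv:
  fixes b :: "nat \<Rightarrow> real"
  assumes nn: "\<And>n. b n \<ge> 0" and sub: "\<And>m n. b (m + n) \<le> b m + b n"
  defines "L \<equiv> Inf ((\<lambda>n. b n / real n) ` {1..})"
  shows "(\<lambda>n. b n / real n) \<longlonglongrightarrow> L" and "\<And>n. n \<ge> 1 \<Longrightarrow> L \<le> b n / real n"
proof -
  have bdd: "bdd_below ((\<lambda>n. b n / real n) ` {1..})"
    by (rule bdd_belowI[of _ 0]) (use nn in auto)
  show low: "\<And>n. n \<ge> 1 \<Longrightarrow> L \<le> b n / real n"
    unfolding L_def by (rule cInf_lower[OF _ bdd]) auto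
  show "(\<lambda>n. b n / real n) \<longlonglongrightarrow> L"
  proof (rule LIMSEQ_I)
    fix e :: real assume e: "e > 0"
    have "L < L + e / 2" using e by simp
    then obtain k where k: "k \<ge> 1" "b k / real k < L + e / 2"
      unfolding L_def using cInf_lessD[of "(\<lambda>n. b n / real n) ` {1..}" "L + e/2"] L_def by fastforce
    define C where "C = (\<Sum>r<k. b r)"
    have C: "b r \<le> C" if "r < k" for r
      unfolding C_def using that nn by (intro member_le_sum) auto
    have C0: "C \<ge> 0" unfolding C_def using nn by (simp add: sum_nonneg)
    obtain N0 :: nat where N0: "N0 > 2 * C / e" using reals_Archimedean2 by blast
    show "\<exists>no. \<forall>n\<ge>no. norm (b n / real n - L) < e"
    proof (intro exI[of _ "Suc N0"] allI impI)
      fix n assume n: "n \<ge> Suc N0"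
      then have n1: "n \<ge> 1" and npos: "real n > 0" by auto
      define q where "q = n div k"
      define r where "r = n mod k"
      have nqr: "n = q * k + r" unfolding q_def r_def by simp
      have rk: "r < k" unfolding r_def using k by simp
      have h1: "b n \<le> real q * b k + b r" unfolding nqr by (rule subadd_iter[OF sub])
      have h2: "real q * b k = real (q * k) * (b k / real k)" using k by (simp add: field_simps)
      have h3: "real (q * k) * (b k / real k) \<le> real n * (b k / real k)"
        using nqr nn[of k] k by (intro mult_right_mono) (auto simp: divide_nonneg_pos)
      have "b n \<le> real n * (b k / real k) + C" using h1 h2 h3 C[OF rk] by linarith
      then have "b n / real n \<le> b k / real k + C / real n" using npos by (simp add: field_simps)
      moreover have "C / real n < e / 2"
      proof -
        have "real n > 2 * C / e" using n N0 by linarith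
        then have "2 * C < real n * e" using e by (simp add: field_simps)
        then show ?thesis using npos e by (simp add: field_simps)
      qed
      ultimately have "b n / real n < L + e" using k by linarith
      moreover have "L \<le> b n / real n" using low[OF n1] .
      ultimately show "norm (b n / real n - L) < e" by simp
    qed
  qed
qed

lemma fekete_lower:
  fixes a :: "nat \<Rightarrow> real"
  assumes ge1: "\<And>n. a n \<ge> 1" and sub: "\<And>m n. a (m + n) \<le> a m * a n"
    and lim: "lim (\<lambda>n. a n powr (1 / real n)) \<ge> exp \<rho>"
  shows "\<And>n. n \<ge> 1 \<Longrightarrow> a n \<ge> exp (\<rho> * real n)"
proof -
  define b where "b n = ln (a n)" for n
  have apos: "a n > 0" for n using ge1[of n] by linarith
  have nn: "b n \<ge> 0" for n unfolding b_def using ge1[of n] by simp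
  have sb: "b (m + n) \<le> b m + b n" for m n
  proof -
    have "ln (a (m + n)) \<le> ln (a m * a n)" using sub[of m n] apos by simp
    then show ?thesis unfolding b_def using apos[of m] apos[of n] by (simp add: ln_mult)
  qed
  define L where "L = Inf ((\<lambda>n. b n / real n) ` {1..})"
  note F = fekete_conv[OF nn sb, folded L_def]
  have "(\<lambda>n. exp (b n / real n)) \<longlonglongrightarrow> exp L" by (rule tendsto_exp[OF F(1)])
  moreover have "eventually (\<lambda>n. exp (b n / real n) = a n powr (1 / real n)) sequentially"
  proof (rule eventually_sequentiallyI[of 1])
    fix n :: nat assume "n \<ge> 1"
    show "exp (b n / real n) = a n powr (1 / real n)" unfolding b_def powr_def using apos[of n] by simp
  qed
  ultimately have "(\<lambda>n. a n powr (1 / real n)) \<longlonglongrightarrow> exp L" by (rule Lim_transform_eventually)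
  then have "lim (\<lambda>n. a n powr (1 / real n)) = exp L" by (rule limI)
  then have "L \<ge> \<rho>" using lim by simp
  fix n :: nat assume n: "n \<ge> 1"
  then have "\<rho> \<le> b n / real n" using F(2)[OF n] \<open>L \<ge> \<rho>\<close> by linarith
  then have "\<rho> * real n \<le> ln (a n)" using n unfolding b_def by (simp add: field_simps)
  then show "a n \<ge> exp (\<rho> * real n)" using apos[of n] by (metis exp_le_cancel_iff exp_ln)
qed



lemma pigeon_sum:
  fixes f :: "'a \<Rightarrow> real"
  assumes "finite I" "I \<noteq> {}" "c \<le> sum f I"
  shows "\<exists>i\<in>I. f i \<ge> c / real (card I)"
proof (rule ccontr)
  assume "\<not> ?thesis"
  then have "\<And>i. i \<in> I \<Longrightarrow> f i < c / real (card I)" by auto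
  moreover have "card I > 0" using assms(1,2) by (simp add: card_gt_0_iff)
  ultimately have "sum f I < real (card I) * (c / real (card I))"
    using sum_bounded_above_strict[of I f "c / real (card I)"] by simp
  also have "\<dots> = c" using assms(1,2) by simp
  finally show False using assms(3) by simp
qed

context skew begin

lemma Fpow_deriv: "\<exists>d. (F ^^ n has_real_derivative d) (at y) \<and> lam ^ n \<le> d \<and> d \<le> \<Lambda> ^ n"
proof (induction n arbitrary: y)
  case 0
  have "((\<lambda>x. x) has_real_derivative 1) (at y)" by (rule DERIV_ident)
  then show ?case by (intro exI[of _ 1]) (simp add: id_def)
next
  case (Suc n)
  from Suc.IH[of "F y"] obtain d where d: "(F ^^ n has_real_derivative d) (at (F y))" "lam ^ n \<le> d" "d \<le> \<Lambda> ^ n"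
    by blast
  have d0: "0 \<le> d" using d(2) lam by (meson order_trans zero_le_power less_imp_le zero_less_one less_trans)
  have D1: "((F ^^ n) \<circ> F has_real_derivative d * deriv F y) (at y)" by (rule DERIV_chain[OF d(1) F_der])
  have eq: "(F ^^ n) \<circ> F = F ^^ Suc n" by (simp only: funpow_Suc_right)
  have l1: "lam ^ n * lam \<le> d * deriv F y"
    by (rule mult_mono) (use d(2) F_exp[of y] lam d0 in auto)
  have l2: "d * deriv F y \<le> \<Lambda> ^ n * \<Lambda>"
    by (rule mult_mono) (use d(3) F_exp[of y] lam d0 in auto)
  have D2: "(F ^^ Suc n has_real_derivative d * deriv F y) (at y)" using D1 by (simp only: eq)
  have l1': "lam ^ Suc n \<le> d * deriv F y" using l1 by (simp only: power_Suc2)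
  have l2': "d * deriv F y \<le> \<Lambda> ^ Suc n" using l2 by (simp only: power_Suc2)
  show ?case using D2 l1' l2' by blast
qed

lemma Fpow_deriv_bd: "lam ^ n \<le> deriv (F ^^ n) y \<and> deriv (F ^^ n) y \<le> \<Lambda> ^ n"
proof -
  obtain d where d: "(F ^^ n has_real_derivative d) (at y)" "lam ^ n \<le> d" "d \<le> \<Lambda> ^ n"
    using Fpow_deriv[of n y] by blast
  have "deriv (F ^^ n) y = d" by (rule DERIV_imp_deriv[OF d(1)])
  then show ?thesis using d by simp
qed

lemma card_words: "card (words deg q) = deg ^ q"
  unfolding words_def by (simp add: card_PiE)

lemma deriv_interval:
  assumes cover: "{ln lam..ln \<Lambda>} \<subseteq> (\<Union>j\<in>{1..J}. {a j<..<b j})" and n: "n \<ge> 1"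
  shows "\<exists>j\<in>{1..J}. deriv (F ^^ n) y \<in> {exp (a j * real n)..exp (b j * real n)}"
proof -
  define d where "d = deriv (F ^^ n) y"
  have bd: "lam ^ n \<le> d" "d \<le> \<Lambda> ^ n" using Fpow_deriv_bd unfolding d_def by auto
  have lp: "lam ^ n > 0" using lam by simp
  then have dp: "d > 0" using bd by linarith
  have L0: "\<Lambda> > 0" using F_exp[of 0] lam by linarith
  have "ln (lam ^ n) \<le> ln d" using bd(1) lp by (subst ln_le_cancel_iff) auto
  moreover have "ln d \<le> ln (\<Lambda> ^ n)" using bd(2) dp L0 by (subst ln_le_cancel_iff) auto
  moreover have "ln (lam ^ n) = real n * ln lam" using lam by (simp add: ln_realpow)
  moreover have "ln (\<Lambda> ^ n) = real n * ln \<Lambda>" using L0 by (simp add: ln_realpow)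
  ultimately have i1: "real n * ln lam \<le> ln d" and i2: "ln d \<le> real n * ln \<Lambda>" by auto
  have np: "real n > 0" using n by simp
  have "ln lam \<le> ln d / real n" using i1 np by (simp add: pos_le_divide_eq mult.commute)
  moreover have "ln d / real n \<le> ln \<Lambda>" using i2 np by (simp add: pos_divide_le_eq mult.commute)
  ultimately have "ln d / real n \<in> {ln lam..ln \<Lambda>}" by simp
  then have "ln d / real n \<in> (\<Union>j\<in>{1..J}. {a j<..<b j})" using cover by (rule subsetD[rotated])
  then obtain j where j: "j \<in> {1..J}" "ln d / real n \<in> {a j<..<b j}" by (rule UN_E)
  then have j: "j \<in> {1..J}" "a j < ln d / real n" "ln d / real n < b j" by auto
  have "a j * real n < ln d" using j(2) np by (simp add: pos_less_divide_eq)
  moreover have "ln d < b j * real n" using j(3) np by (simp add: pos_divide_less_eq)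
  ultimately have "exp (a j * real n) \<le> exp (ln d)" "exp (ln d) \<le> exp (b j * real n)" by auto
  then have "exp (a j * real n) \<le> d" "d \<le> exp (b j * real n)" using dp by auto
  then show ?thesis using j(1) unfolding d_def by auto
qed

end


context skew begin

lemma main_step:
  fixes J q NN n :: nat and a b :: "nat \<Rightarrow> real" and \<rho> :: real
  assumes cover: "{ln lam..ln \<Lambda>} \<subseteq> (\<Union>j\<in>{1..J}. {a j<..<b j})"
    and K: "4 * real J * real (q + 1) * real NN < exp (real q * \<rho> / 2)"
    and lowb: "\<And>n. n \<ge> 1 \<Longrightarrow> Nc n \<ge> exp (\<rho> * real n)"
    and n: "q \<le> n" "1 \<le> n"
    and big: "Nc n > exp (real q * \<rho> / 2) * Nc (n - q)"
  shows "\<exists>x s v0 j B \<Sigma>. x \<in> circle \<and> s \<in> circle \<and> norm (v0 :: real \<times> real) = 1 \<and>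
        j \<in> {1..J} \<and> B \<subseteq> words deg q \<and>
        card B = 2 * (q + 1) * NN \<and>
        (\<forall>\<beta>\<in>B. \<Sigma> \<beta> \<subseteq> words deg n \<and>
           real (card (\<Sigma> \<beta>)) \<ge> exp (\<rho> * real n) / real deg ^ q / (2 * real J) \<and>
           (\<forall>\<alpha>\<in>\<Sigma> \<beta>. trunc q \<alpha> = \<beta> \<and>
              v0 \<in> cone_image F \<tau> lam R n (xword F n \<alpha> x) \<and>
              deriv (F ^^ n) (xword F n \<alpha> x) \<in> {exp (a j * real n)..exp (b j * real n)}))"
proof -
  obtain x v where xv: "x \<in> circle" "norm v = 1" "Nc n = real (card (P n x v))"
    using Nc_attained by blast
  define xw where "xw = (\<lambda>\<alpha>. xword F n \<alpha> x)"
  define S where "S = {\<alpha> \<in> words deg n. v \<in> cone_image F \<tau> lam R n (xw \<alpha>)}"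
  have bij: "bij_betw xw (words deg n) (Pre n x)" unfolding xw_def by (rule xword_bij[OF xv(1)])
  have Sw: "S \<subseteq> words deg n" unfolding S_def by auto
  have finS: "finite S" using Sw words_finite finite_subset by blast
  have injS: "inj_on xw S" using bij_betw_imp_inj_on[OF bij] inj_on_subset Sw by blast
  have imS: "xw ` S = P n x v"
  proof (intro set_eqI iffI)
    fix y assume "y \<in> xw ` S"
    then obtain \<alpha> where "\<alpha> \<in> S" "y = xw \<alpha>" by auto
    then show "y \<in> P n x v" using bij_betwE[OF bij] unfolding S_def P_def Pre_def by auto
  next
    fix y assume y: "y \<in> P n x v"
    then have "y \<in> Pre n x" unfolding P_def Pre_def by auto
    then obtain \<alpha> where "\<alpha> \<in> words deg n" "y = xw \<alpha>" using bij_betw_imp_surj_on[OF bij] by auto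
    then show "y \<in> xw ` S" using y unfolding S_def P_def by auto
  qed
  have cardS: "real (card S) = Nc n" using card_image[OF injS] imS xv(3) by simp
  define dd where "dd = (\<lambda>\<alpha>. deriv (F ^^ n) (xw \<alpha>))"
  define Sj where "Sj = (\<lambda>j. {\<alpha> \<in> S. dd \<alpha> \<in> {exp (a j * real n)..exp (b j * real n)}})"
  have SU: "S \<subseteq> (\<Union>j\<in>{1..J}. Sj j)"
  proof
    fix \<alpha> assume "\<alpha> \<in> S"
    then show "\<alpha> \<in> (\<Union>j\<in>{1..J}. Sj j)"
      using deriv_interval[OF cover n(2), of "xw \<alpha>"] unfolding Sj_def dd_def by auto
  qed
  have finSj: "finite (Sj j)" for j unfolding Sj_def using finS by auto
  have "card S \<le> card (\<Union>j\<in>{1..J}. Sj j)" by (rule card_mono[OF _ SU]) (use finSj in auto)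
  also have "\<dots> \<le> (\<Sum>j\<in>{1..J}. card (Sj j))" by (rule card_UN_le) auto
  finally have sumS: "real (card S) \<le> (\<Sum>j\<in>{1..J}. real (card (Sj j)))"
    by (metis of_nat_le_iff of_nat_sum)
  have lL: "lam \<le> \<Lambda>" using F_exp[of 0] by auto
  have "ln lam \<in> (\<Union>j\<in>{1..J}. {a j<..<b j})" using cover lL lam by (intro subsetD[OF cover]) auto
  then have Jne: "{1..J} \<noteq> {}" by auto
  then have J1: "J \<ge> 1" by auto
  have Jpos: "real J > 0" using J1 by simp
  obtain j where j: "j \<in> {1..J}" "real (card (Sj j)) \<ge> real (card S) / real (card {1..J})"
    using pigeon_sum[OF _ Jne sumS] by auto
  have cSj: "real (card (Sj j)) \<ge> Nc n / real J" using j(2) cardS by simp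
  define C where "C = (\<lambda>\<beta>. {\<alpha> \<in> Sj j. trunc q \<alpha> = \<beta>})"
  define T where "T = exp (\<rho> * real n) / real deg ^ q / (2 * real J)"
  define W where "W = words deg q"
  define Bg where "Bg = {\<beta> \<in> W. T \<le> real (card (C \<beta>))}"
  have finW: "finite W" unfolding W_def by (rule words_finite)
  have cardW: "card W = deg ^ q" unfolding W_def by (rule card_words)
  have finC: "finite (C \<beta>)" for \<beta> unfolding C_def using finSj by auto
  have Cbd: "real (card (C \<beta>)) \<le> Nc (n - q)" if \<beta>: "\<beta> \<in> W" for \<beta>
  proof -
    define w where "w = xword F q \<beta> x"
    have w: "w \<in> circle" unfolding w_def
      using xword_props[OF xv(1) words_lt[OF \<beta>[unfolded W_def]]] Iword_circle by blast
    define Fb where "Fb = {y \<in> P ((n - q) + q) x v. (E ^^ (n - q)) y = w}"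
    have sub: "xw ` C \<beta> \<subseteq> Fb"
    proof
      fix y assume "y \<in> xw ` C \<beta>"
      then obtain \<alpha> where \<alpha>: "\<alpha> \<in> C \<beta>" "y = xw \<alpha>" by auto
      then have aS: "\<alpha> \<in> S" and tr: "trunc q \<alpha> = \<beta>" unfolding C_def Sj_def by auto
      have "y \<in> P n x v" using imS aS \<alpha>(2) by auto
      moreover have "(E ^^ (n - q)) y = w"
        using xword_trunc[OF xv(1) Sw[THEN subsetD, OF aS] n(1)] tr \<alpha>(2) unfolding xw_def w_def by simp
      ultimately show "y \<in> Fb" unfolding Fb_def using n(1) by simp
    qed
    have finFb: "finite Fb" unfolding Fb_def using P_finite[OF xv(1)] by auto
    have injC: "inj_on xw (C \<beta>)" using injS unfolding C_def Sj_def by (rule inj_on_subset) auto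
    have "card (C \<beta>) \<le> card Fb" using card_mono[OF finFb sub] card_image[OF injC] by simp
    then have "real (card (C \<beta>)) \<le> real (card Fb)" by simp
    also have "\<dots> \<le> Nc (n - q)" unfolding Fb_def by (rule fiber[OF xv(1,2) w])
    finally show ?thesis .
  qed
  have SjU: "Sj j \<subseteq> (\<Union>\<beta>\<in>W. C \<beta>)"
  proof
    fix \<alpha> assume a: "\<alpha> \<in> Sj j"
    then have "\<alpha> \<in> words deg n" using Sw unfolding Sj_def by auto
    then have "trunc q \<alpha> \<in> W" unfolding W_def using trunc_words n(1) by blast
    then show "\<alpha> \<in> (\<Union>\<beta>\<in>W. C \<beta>)" using a unfolding C_def by auto
  qed
  have "card (Sj j) \<le> card (\<Union>\<beta>\<in>W. C \<beta>)" by (rule card_mono[OF _ SjU]) (use finC finW in auto)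
  also have "\<dots> \<le> (\<Sum>\<beta>\<in>W. card (C \<beta>))" by (rule card_UN_le[OF finW])
  finally have s1: "real (card (Sj j)) \<le> (\<Sum>\<beta>\<in>W. real (card (C \<beta>)))"
    by (metis of_nat_le_iff of_nat_sum)
  have BgW: "Bg \<subseteq> W" unfolding Bg_def by auto
  have split: "(\<Sum>\<beta>\<in>W. real (card (C \<beta>))) = (\<Sum>\<beta>\<in>Bg. real (card (C \<beta>))) + (\<Sum>\<beta>\<in>W - Bg. real (card (C \<beta>)))"
    using sum.subset_diff[OF BgW finW] by (simp add: add.commute)
  have s2: "(\<Sum>\<beta>\<in>Bg. real (card (C \<beta>))) \<le> real (card Bg) * Nc (n - q)"
    using sum_bounded_above[of Bg "\<lambda>\<beta>. real (card (C \<beta>))" "Nc (n - q)"] Cbd BgW by auto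
  have T0: "T \<ge> 0" unfolding T_def using Jpos by simp
  have s3: "(\<Sum>\<beta>\<in>W - Bg. real (card (C \<beta>))) \<le> real (card (W - Bg)) * T"
    using sum_bounded_above[of "W - Bg" "\<lambda>\<beta>. real (card (C \<beta>))" T] unfolding Bg_def by force
  have "card (W - Bg) \<le> card W" using finW by (simp add: card_mono)
  then have "real (card (W - Bg)) * T \<le> real (card W) * T" using T0 by (simp add: mult_right_mono)
  also have "real (card W) * T = exp (\<rho> * real n) / (2 * real J)"
    unfolding cardW T_def using deg by (simp add: field_simps)
  finally have s4: "(\<Sum>\<beta>\<in>W - Bg. real (card (C \<beta>))) \<le> exp (\<rho> * real n) / (2 * real J)"
    using s3 by linarith
  define M where "M = Nc (n - q)"
  define X where "X = real (card Bg)"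
  have M1: "M \<ge> 1" unfolding M_def by (rule Nc_ge1)
  have h1: "Nc n / real J \<le> X * M + exp (\<rho> * real n) / (2 * real J)"
    using cSj s1 split s2 s4 unfolding X_def M_def by linarith
  have e_le: "exp (\<rho> * real n) / (2 * real J) \<le> Nc n / (2 * real J)"
    using lowb[OF n(2)] Jpos by (simp add: divide_right_mono)
  have half: "Nc n / real J = 2 * (Nc n / (2 * real J))" using Jpos by simp
  have h2: "X * M \<ge> Nc n / (2 * real J)" using h1 e_le half by linarith
  have h3: "Nc n / (2 * real J) > exp (real q * \<rho> / 2) * M / (2 * real J)"
    using big Jpos unfolding M_def by (simp add: divide_strict_right_mono)
  have h4: "exp (real q * \<rho> / 2) * M > (4 * real J * real (q + 1) * real NN) * M"
    using K M1 by (simp add: mult_strict_right_mono)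
  have h5: "(4 * real J * real (q + 1) * real NN) * M / (2 * real J) = (2 * real (q + 1) * real NN) * M"
    using Jpos by (simp add: field_simps)
  have "exp (real q * \<rho> / 2) * M / (2 * real J) > (4 * real J * real (q + 1) * real NN) * M / (2 * real J)"
    by (rule divide_strict_right_mono[OF h4]) (use Jpos in simp)
  then have "X * M > (2 * real (q + 1) * real NN) * M" using h2 h3 h5 by linarith
  then have "X > 2 * real (q + 1) * real NN" using M1 by (simp add: mult_less_cancel_right)
  then have "2 * (q + 1) * NN \<le> card Bg" unfolding X_def by (metis of_nat_less_iff of_nat_mult of_nat_numeral less_imp_le)
  then obtain B where B: "B \<subseteq> Bg" "card B = 2 * (q + 1) * NN" by (rule obtain_subset_with_card_n) auto
  show ?thesis
  proof (intro exI conjI)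
    show "x \<in> circle" by (fact xv(1))
    show "(0::real) \<in> circle" by (rule zero_circle)
    show "norm v = 1" by (fact xv(2))
    show "j \<in> {1..J}" by (fact j(1))
    show "B \<subseteq> words deg q" using B(1) BgW unfolding W_def by auto
    show "card B = 2 * (q + 1) * NN" by (fact B(2))
    show "\<forall>\<beta>\<in>B. C \<beta> \<subseteq> words deg n \<and>
           real (card (C \<beta>)) \<ge> exp (\<rho> * real n) / real deg ^ q / (2 * real J) \<and>
           (\<forall>\<alpha>\<in>C \<beta>. trunc q \<alpha> = \<beta> \<and>
              v \<in> cone_image F \<tau> lam R n (xword F n \<alpha> x) \<and>
              deriv (F ^^ n) (xword F n \<alpha> x) \<in> {exp (a j * real n)..exp (b j * real n)})"
    proof
      fix \<beta> assume "\<beta> \<in> B"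
      then have "\<beta> \<in> Bg" using B(1) by auto
      then have "T \<le> real (card (C \<beta>))" unfolding Bg_def by auto
      then show "C \<beta> \<subseteq> words deg n \<and>
           real (card (C \<beta>)) \<ge> exp (\<rho> * real n) / real deg ^ q / (2 * real J) \<and>
           (\<forall>\<alpha>\<in>C \<beta>. trunc q \<alpha> = \<beta> \<and>
              v \<in> cone_image F \<tau> lam R n (xword F n \<alpha> x) \<and>
              deriv (F ^^ n) (xword F n \<alpha> x) \<in> {exp (a j * real n)..exp (b j * real n)})"
        unfolding T_def C_def Sj_def S_def dd_def xw_def by auto
    qed
  qed
qed

end


lemma Ck_der: assumes "C_k r g" "r \<ge> 1"
  shows "(\<forall>x. (g has_real_derivative deriv g x) (at x)) \<and> continuous_on UNIV (deriv g)"
proof -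
  obtain D where D: "D 0 = g" "\<forall>i<r. \<forall>x. (D i has_real_derivative D (Suc i) x) (at x)"
    "\<forall>i\<le>r. continuous_on UNIV (D i)" using assms(1) unfolding C_k_def by blast
  have d: "(g has_real_derivative D 1 x) (at x)" for x using D(1,2) assms(2) by fastforce
  then have "deriv g x = D 1 x" for x by (rule DERIV_imp_deriv)
  then have "deriv g = D 1" by auto
  then show ?thesis using d D(3) assms(2) by auto
qed

lemma periodic_bdd:
  fixes g :: "real \<Rightarrow> real"
  assumes cont: "continuous_on UNIV g" and per: "\<And>x. g (x + 1) = g x"
  shows "bdd_above (range (\<lambda>x. \<bar>g x\<bar>))"
proof -
  have pn: "g (y + real n) = g y" for y n
  proof (induction n)
    case 0 then show ?case by simp
  next
    case (Suc n)
    have "g (y + real (Suc n)) = g ((y + real n) + 1)" by (simp add: algebra_simps)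
    then show ?case using per Suc by simp
  qed
  have fr: "g x = g (frac x)" for x
  proof (cases "\<lfloor>x\<rfloor> \<ge> 0")
    case True
    have "x = frac x + real (nat \<lfloor>x\<rfloor>)" using True by (simp add: frac_def)
    then show ?thesis using pn[of "frac x" "nat \<lfloor>x\<rfloor>"] by simp
  next
    case False
    have "frac x = x + real (nat (- \<lfloor>x\<rfloor>))" using False by (simp add: frac_def)
    then show ?thesis using pn[of x "nat (- \<lfloor>x\<rfloor>)"] by simp
  qed
  have "compact (g ` {0..1})"
    by (rule compact_continuous_image) (use cont continuous_on_subset in auto)
  then obtain B where B: "\<forall>y\<in>g ` {0..1}. norm y \<le> B" using compact_imp_bounded bounded_iff by metis
  have "\<bar>g x\<bar> \<le> B" for x
  proof -
    have "frac x \<in> {0..1}" using frac_lt_1[of x] by auto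
    then show ?thesis using B fr[of x] by auto
  qed
  then show ?thesis by (intro bdd_aboveI[of _ B]) auto
qed

lemma growth_contra:
  fixes a :: "nat \<Rightarrow> real" and q n1 :: nat and \<rho> :: real
  assumes q: "q > 0" and rho: "\<rho> > 0" and lowb: "\<And>n. n \<ge> 1 \<Longrightarrow> a n \<ge> exp (\<rho> * real n)"
    and n1: "n1 \<ge> 1"
    and step: "\<And>n. n \<ge> n1 + q \<Longrightarrow> a n \<le> exp (real q * \<rho> / 2) * a (n - q)"
  shows False
proof -
  define K where "K = exp (real q * \<rho> / 2)"
  have K1: "K > 1" unfolding K_def using q rho by simp
  have it: "a (n1 + i * q) \<le> K ^ i * a n1" for i
  proof (induction i)
    case 0 then show ?case by simp
  next
    case (Suc i)
    have "a (n1 + Suc i * q) \<le> K * a (n1 + Suc i * q - q)" unfolding K_def by (rule step) simp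
    also have "n1 + Suc i * q - q = n1 + i * q" by simp
    also have "K * a (n1 + i * q) \<le> K * (K ^ i * a n1)" using Suc K1 by (intro mult_left_mono) auto
    finally show ?case by (simp add: mult.assoc)
  qed
  obtain i where i: "a n1 < K ^ i" using real_arch_pow[OF K1] by blast
  have "exp (\<rho> * real (n1 + i * q)) \<le> a (n1 + i * q)" by (rule lowb) (use n1 in simp)
  moreover have "exp (\<rho> * real (n1 + i * q)) = exp (\<rho> * real n1) * (K ^ i * K ^ i)"
  proof -
    have "\<rho> * real (n1 + i * q) = \<rho> * real n1 + real (2 * i) * (real q * \<rho> / 2)"
      by (simp add: algebra_simps)
    then have "exp (\<rho> * real (n1 + i * q)) = exp (\<rho> * real n1) * exp (real (2 * i) * (real q * \<rho> / 2))"
      by (simp only: exp_add)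
    also have "exp (real (2 * i) * (real q * \<rho> / 2)) = K ^ (2 * i)"
      unfolding K_def by (rule exp_of_nat_mult)
    finally have "exp (\<rho> * real (n1 + i * q)) = exp (\<rho> * real n1) * K ^ (2 * i)" .
    then show ?thesis by (simp add: mult_2 power_add)
  qed
  ultimately have "exp (\<rho> * real n1) * (K ^ i * K ^ i) \<le> K ^ i * a n1" using it[of i] by linarith
  moreover have "exp (\<rho> * real n1) \<ge> 1" using rho by simp
  moreover have "K ^ i > 0" using K1 by simp
  ultimately have "K ^ i * K ^ i \<le> K ^ i * a n1"
    by (smt (verit) mult_le_cancel_right1 mult_pos_pos mult.commute mult.assoc)
  then have "K ^ i \<le> a n1" using \<open>K ^ i > 0\<close> by simp
  then show False using i by simp
qed

theorem proposition3p3: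
  fixes F \<tau> :: "real \<Rightarrow> real" and r deg :: nat and lam \<Lambda> R \<rho> :: real
    and J :: nat and a b :: "nat \<Rightarrow> real" and q :: nat
  assumes r: "r \<ge> 2"
    and deg: "deg \<ge> 2"
    and F_Cr: "C_k r F"
    and F_lift: "\<And>x. F (x + 1) = F x + real deg"
    and F_fix: "F 0 = 0"
    and lam: "1 < lam"
    and F_exp: "\<And>x. lam \<le> deriv F x \<and> deriv F x \<le> \<Lambda>"
    and tau_Cr: "C_k r \<tau>"
    and tau_per: "\<And>x. \<tau> (x + 1) = \<tau> x"
    and R: "R > (SUP x. \<bar>deriv \<tau> x\<bar>)"
    and rho: "\<rho> > 0"
    and cover: "{ln lam..ln \<Lambda>} \<subseteq> (\<Union>j\<in>{1..J}. {a j<..<b j})"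
    and short: "\<And>j. j \<in> {1..J} \<Longrightarrow> b j - a j < \<rho> / 3"
    and q_pos: "q > 0"
    and q1: "real (q + 1) * real (nat \<lceil>6 / \<rho> * ln (real_of_int \<lceil>2 * \<Lambda>\<rceil>)\<rceil>)
               * exp (- (real q * \<rho> / 2)) < 1 / (4 * real J)"
    and q2: "real deg ^ q \<ge> 2 * real (q + 1) * real (nat \<lceil>6 / \<rho> * ln (real_of_int \<lceil>2 * \<Lambda>\<rceil>)\<rceil>)"
    and Nbig: "Ntau F \<tau> lam R \<ge> exp \<rho>"
  shows "infinite {n. q \<le> n \<and>
     (\<exists>x s v0 j B \<Sigma>. x \<in> circle \<and> s \<in> circle \<and> norm (v0 :: real \<times> real) = 1 \<and>
        j \<in> {1..J} \<and> B \<subseteq> words deg q \<and>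
        card B = 2 * (q + 1) * nat \<lceil>6 / \<rho> * ln (real_of_int \<lceil>2 * \<Lambda>\<rceil>)\<rceil> \<and>
        (\<forall>\<beta>\<in>B. \<Sigma> \<beta> \<subseteq> words deg n \<and>
           real (card (\<Sigma> \<beta>)) \<ge> exp (\<rho> * real n) / real deg ^ q / (2 * real J) \<and>
           (\<forall>\<alpha>\<in>\<Sigma> \<beta>. trunc q \<alpha> = \<beta> \<and>
              v0 \<in> cone_image F \<tau> lam R n (xword F n \<alpha> x) \<and>
              deriv (F ^^ n) (xword F n \<alpha> x) \<in> {exp (a j * real n)..exp (b j * real n)})))}"
proof -
  have r1: "r \<ge> 1" using r by simp
  have Fd: "\<And>x. (F has_real_derivative deriv F x) (at x)" using Ck_der[OF F_Cr r1] by blast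
  have td: "\<And>x. (\<tau> has_real_derivative deriv \<tau> x) (at x)" and tc: "continuous_on UNIV (deriv \<tau>)"
    using Ck_der[OF tau_Cr r1] by blast+
  have tper: "deriv \<tau> (x + 1) = deriv \<tau> x" for x
  proof -
    have "((\<lambda>x. \<tau> (x + 1)) has_real_derivative deriv \<tau> (x + 1)) (at x)"
      using td[of "x + 1"] DERIV_shift by blast
    moreover have "(\<lambda>x. \<tau> (x + 1)) = \<tau>" using tau_per by auto
    ultimately have "(\<tau> has_real_derivative deriv \<tau> (x + 1)) (at x)" by simp
    then show ?thesis using td[of x] DERIV_unique by blast
  qed
  have bdd: "bdd_above (range (\<lambda>x. \<bar>deriv \<tau> x\<bar>))" by (rule periodic_bdd[OF tc tper])
  have tb: "\<bar>deriv \<tau> x\<bar> \<le> R" for x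
  proof -
    have "\<bar>deriv \<tau> x\<bar> \<le> (SUP x. \<bar>deriv \<tau> x\<bar>)" by (rule cSUP_upper[OF _ bdd]) simp
    then show ?thesis using R by linarith
  qed
  interpret skew F \<tau> deg lam \<Lambda> R
    by unfold_locales (use deg Fd F_lift F_fix lam F_exp tb in auto)
  have lowb: "\<And>n. n \<ge> 1 \<Longrightarrow> Nc n \<ge> exp (\<rho> * real n)"
    by (rule fekete_lower[of "\<lambda>n. Nc n", OF Nc_ge1 submult]) (use Nbig in \<open>simp add: Ntau_def\<close>)
  have lL: "lam \<le> \<Lambda>" using F_exp[of 0] by auto
  have "ln lam \<in> (\<Union>j\<in>{1..J}. {a j<..<b j})" using lL lam by (intro subsetD[OF cover]) auto
  then have "{1..J} \<noteq> {}" by auto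
  then have Jpos: "real J > 0" by auto
  define NN where "NN = nat \<lceil>6 / \<rho> * ln (real_of_int \<lceil>2 * \<Lambda>\<rceil>)\<rceil>"
  have K: "4 * real J * real (q + 1) * real NN < exp (real q * \<rho> / 2)"
  proof -
    define e where "e = exp (real q * \<rho> / 2)"
    have e0: "e > 0" unfolding e_def by simp
    have q1': "real (q + 1) * real NN * exp (- (real q * \<rho> / 2)) < 1 / (4 * real J)"
      unfolding NN_def by (rule q1)
    have em: "exp (- (real q * \<rho> / 2)) = 1 / e" unfolding e_def by (simp add: exp_minus inverse_eq_divide)
    define A where "A = real (q + 1) * real NN"
    have "A * (1 / e) < 1 / (4 * real J)" using q1' unfolding em A_def .
    then have "A * (1 / e) * (4 * real J * e) < 1 / (4 * real J) * (4 * real J * e)"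
      by (rule mult_strict_right_mono) (use e0 Jpos in simp)
    moreover have "A * (1 / e) * (4 * real J * e) = A * (4 * real J)" using e0 by simp
    moreover have "1 / (4 * real J) * (4 * real J * e) = e" using Jpos by simp
    ultimately have "real (q + 1) * real NN * (4 * real J) < e" unfolding A_def by simp
    then have "real (q + 1) * real NN * (4 * real J) < exp (real q * \<rho> / 2)" unfolding e_def .
    then show ?thesis by (simp only: ac_simps)
  qed
  show ?thesis
  proof
    assume fin: "finite {n. q \<le> n \<and>
     (\<exists>x s v0 j B \<Sigma>. x \<in> circle \<and> s \<in> circle \<and> norm (v0 :: real \<times> real) = 1 \<and>
        j \<in> {1..J} \<and> B \<subseteq> words deg q \<and>
        card B = 2 * (q + 1) * nat \<lceil>6 / \<rho> * ln (real_of_int \<lceil>2 * \<Lambda>\<rceil>)\<rceil> \<and>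
        (\<forall>\<beta>\<in>B. \<Sigma> \<beta> \<subseteq> words deg n \<and>
           real (card (\<Sigma> \<beta>)) \<ge> exp (\<rho> * real n) / real deg ^ q / (2 * real J) \<and>
           (\<forall>\<alpha>\<in>\<Sigma> \<beta>. trunc q \<alpha> = \<beta> \<and>
              v0 \<in> cone_image F \<tau> lam R n (xword F n \<alpha> x) \<and>
              deriv (F ^^ n) (xword F n \<alpha> x) \<in> {exp (a j * real n)..exp (b j * real n)})))}"
      (is "finite {n. q \<le> n \<and> ?P n}")
    then obtain m where m0: "\<forall>n\<in>{n. q \<le> n \<and> ?P n}. n < m"
      unfolding finite_nat_set_iff_bounded by (rule exE)
    have m: "n < m" if "q \<le> n" "?P n" for n
    proof -
      have "n \<in> {n. q \<le> n \<and> ?P n}" using that by (intro CollectI conjI)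
      then show ?thesis using m0 by (rule bspec[rotated])
    qed
    show False
    proof (rule growth_contra[of q \<rho> "\<lambda>n. Nc n" "max m 1"])
      show "0 < q" by (fact q_pos)
      show "0 < \<rho>" by (fact rho)
      show "\<And>n. 1 \<le> n \<Longrightarrow> exp (\<rho> * real n) \<le> Nc n" by (fact lowb)
      show "1 \<le> max m 1" by simp
      fix n assume n: "max m 1 + q \<le> n"
      show "Nc n \<le> exp (real q * \<rho> / 2) * Nc (n - q)"
      proof (rule ccontr)
        assume "\<not> ?thesis"
        then have big: "Nc n > exp (real q * \<rho> / 2) * Nc (n - q)" by simp
        have qn: "q \<le> n" using n by simp
        have n1: "1 \<le> n" using n by simp
        have "?P n" using main_step[OF cover K lowb qn n1 big] unfolding NN_def .
        then have "n < m" by (rule m[OF qn])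
        then show False using n by simp
      qed
    qed
  qed
qed


end
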